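(* Let $N\ge 3$ and let $A=(A_n)_{n\in\mathbb{Z}_{2N}}\in\mathbb{R}^{2N}$ satisfy $\sum_{l=1}^N A_{2l}<\sum_{l=1}^N A_{2l-1}$. Define $\bar A=(\bar A_n)_{n\in\mathbb{Z}_{2N}}$ by, for each $n\in\mathbb{Z}_N$ (indices modulo $2N$), $$\bar A_{2n}=\min\Big(A_{2n+1},\ A_{2n}-\min_{0\le k\le N-1}\sum_{l=1}^{k}\big(A_{2(n-l)+1}-A_{2(n-l)}\big)\Big),\qquad \bar A_{2n+1}=A_{2n+1}+A_{2n+2}-\bar A_{2n}$$ (the empty sum for $k=0$ being $0$). For $1\le k\le N$ let $$H_k(A)=\min_{\substack{1\le i_1\triangleleft i_2\triangleleft\cdots\triangleleft i_k\le 2N\\ (i_1,i_k)\neq(1,2N)}}\big(A_{i_1}+\cdots+A_{i_k}\big),$$ and $H_{N+1}(A)=\sum_{i=1}^{2N}A_i$. Then $H_k(\bar A)=H_k(A)$ for all $1\le k\le N+1$.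
   Context: For integers $i,j$, $i\triangleleft j$ means $i+1<j$. The minimum in $H_k$ runs over index tuples $1\le i_1<\dots<i_k\le 2N$ with consecutive indices differing by at least $2$, excluding tuples with $i_1=1$ and $i_k=2N$ simultaneously. The map $A\mapsto\bar A$ is the time evolution of the tropical periodic Toda lattice on the phase space $\{A\in\mathbb{R}^{2N}:\sum_{l}A_{2l}<\sum_l A_{2l-1}\}$. *)

theory Defs
  imports Main "HOL.Real"
begin

text \<open>A vector A in R^{2N} is represented by a function nat => real; only the
values at 0..2N-1 matter. Component A_n (n an integer, taken modulo 2N) is
accessed via tidx.\<close>

definition tidx :: "nat \<Rightarrow> (nat \<Rightarrow> real) \<Rightarrow> int \<Rightarrow> real" where
  "tidx N A n = A (nat (n mod (2 * int N)))"

definition phase_space :: "nat \<Rightarrow> (nat \<Rightarrow> real) \<Rightarrow> bool" where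
  "phase_space N A \<longleftrightarrow>
     (\<Sum>l=1..N. tidx N A (2 * int l)) < (\<Sum>l=1..N. tidx N A (2 * int l - 1))"

definition bar_even :: "nat \<Rightarrow> (nat \<Rightarrow> real) \<Rightarrow> int \<Rightarrow> real" where
  "bar_even N A n = min (tidx N A (2*n+1))
     (tidx N A (2*n) - Min ((\<lambda>k. \<Sum>l=1..k. tidx N A (2*(n - int l)+1) - tidx N A (2*(n - int l))) ` {0..<N}))"

definition toda_step :: "nat \<Rightarrow> (nat \<Rightarrow> real) \<Rightarrow> nat \<Rightarrow> real" where
  "toda_step N A m =
     (let r = int m mod (2 * int N) in
      if even r then bar_even N A (r div 2)
      else tidx N A r + tidx N A (r + 1) - bar_even N A (r div 2))"

definition adm_sets :: "nat \<Rightarrow> nat \<Rightarrow> nat set set" where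
  "adm_sets N k = {I. I \<subseteq> {1..2*N} \<and> card I = k \<and>
       (\<forall>i\<in>I. \<forall>j\<in>I. i < j \<longrightarrow> i + 1 < j) \<and> \<not> (1 \<in> I \<and> 2*N \<in> I)}"

definition H :: "nat \<Rightarrow> nat \<Rightarrow> (nat \<Rightarrow> real) \<Rightarrow> real" where
  "H N k A = (if k = N + 1 then (\<Sum>i=1..2*N. tidx N A (int i))
              else Min ((\<lambda>I. \<Sum>i\<in>I. tidx N A (int i)) ` adm_sets N k))"

end

theory Submission
  imports Defs
begin


lemma shift_lemma:
  fixes P :: "'a set" and nxt prv :: "'a \<Rightarrow> 'a" and E :: "'a \<Rightarrow> bool" and f g c :: "'a \<Rightarrow> real"
  assumes fin: "finite P"
    and nP: "\<And>p. p \<in> P \<Longrightarrow> nxt p \<in> P" and pP: "\<And>p. p \<in> P \<Longrightarrow> prv p \<in> P"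
    and np: "\<And>p. p \<in> P \<Longrightarrow> nxt (prv p) = p" and pn: "\<And>p. p \<in> P \<Longrightarrow> prv (nxt p) = p"
    and EE: "\<And>p. p \<in> P \<Longrightarrow> E p \<Longrightarrow> E (nxt (nxt p))"
    and EE': "\<And>p. p \<in> P \<Longrightarrow> E p \<Longrightarrow> E (prv (prv p))"
    and c0: "\<And>p. p \<in> P \<Longrightarrow> E p \<Longrightarrow> 0 \<le> c p"
    and sh: "\<And>p. p \<in> P \<Longrightarrow> \<not> E p \<or> c p \<noteq> 0 \<Longrightarrow> g (prv p) \<le> f p"
    and st: "\<And>p. p \<in> P \<Longrightarrow> E p \<Longrightarrow> g p = f p + c p - c (nxt (nxt p))"
    and IP: "I \<subseteq> P" and Ii: "\<And>i. i \<in> I \<Longrightarrow> nxt i \<notin> I"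
  shows "\<exists>I'. I' \<subseteq> P \<and> card I' = card I \<and> (\<forall>i\<in>I'. nxt i \<notin> I') \<and> sum g I' \<le> sum f I"
proof -
  define q where "q = (\<lambda>p. prv (prv p))"
  define stay where "stay = (\<lambda>p. E p \<and> (\<exists>t. c ((q^^t) p) = 0 \<and> (\<forall>r\<le>t. (q^^r) p \<in> I)))"
  define \<sigma> where "\<sigma> = (\<lambda>p. if stay p then p else prv p)"
  have finI: "finite I" using fin IP finite_subset by blast
  have prvne: "prv p \<noteq> p" if "p \<in> I" for p
  proof
    assume "prv p = p"
    then have "nxt p = p" using np[of p] that IP by auto
    then show False using Ii[OF that] that by simp
  qed
  have inj: "inj_on \<sigma> I"
  proof (rule inj_onI)
    fix p p' assume p: "p \<in> I" and p': "p' \<in> I" and eq: "\<sigma> p = \<sigma> p'"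
    show "p = p'"
    proof (cases "stay p")
      case True
      show ?thesis
      proof (cases "stay p'")
        case True
        with \<open>stay p\<close> eq show ?thesis by (simp add: \<sigma>_def)
      next
        case False
        with \<open>stay p\<close> eq have "p = prv p'" by (simp add: \<sigma>_def)
        then have "nxt p = p'" using np p' IP by auto
        with Ii[OF p] p' show ?thesis by simp
      qed
    next
      case False
      show ?thesis
      proof (cases "stay p'")
        case True
        with \<open>\<not> stay p\<close> eq have "p' = prv p" by (simp add: \<sigma>_def)
        then have "nxt p' = p" using np p IP by auto
        with Ii[OF p'] p show ?thesis by simp
      next
        case False
        with \<open>\<not> stay p\<close> eq have "prv p = prv p'" by (simp add: \<sigma>_def)
        then have "nxt (prv p) = nxt (prv p')" by simp
        then show ?thesis using np p p' IP by (metis subsetD)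
      qed
    qed
  qed
  have sub: "\<sigma> ` I \<subseteq> P" using IP pP by (auto simp: \<sigma>_def)
  have stay_nxt2: "stay (nxt (nxt p))" if p: "p \<in> I" and sp: "stay p" and p2: "nxt (nxt p) \<in> I" for p
  proof -
    from sp obtain t where t1: "c ((q^^t) p) = 0" and t2: "\<forall>r\<le>t. (q^^r) p \<in> I" and Ep: "E p"
      unfolding stay_def by blast
    have qp: "q (nxt (nxt p)) = p" unfolding q_def using pn nP p IP by auto
    have "E (nxt (nxt p))" using EE Ep p IP by auto
    moreover have "c ((q^^(Suc t)) (nxt (nxt p))) = 0"
      using t1 qp by (simp add: funpow_Suc_right del: funpow.simps)
    moreover have "\<forall>r\<le>Suc t. (q^^r) (nxt (nxt p)) \<in> I"
    proof (intro allI impI)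
      fix r assume "r \<le> Suc t"
      show "(q^^r) (nxt (nxt p)) \<in> I"
      proof (cases r)
        case 0 then show ?thesis using p2 by simp
      next
        case (Suc r')
        then have "(q^^r) (nxt (nxt p)) = (q^^r') p"
          using qp by (simp add: funpow_Suc_right del: funpow.simps)
        then show ?thesis using t2 Suc \<open>r \<le> Suc t\<close> by auto
      qed
    qed
    ultimately show ?thesis unfolding stay_def by blast
  qed
  have indep: "\<forall>i\<in>\<sigma> ` I. nxt i \<notin> \<sigma> ` I"
  proof (intro ballI notI)
    fix x assume "x \<in> \<sigma> ` I" and "nxt x \<in> \<sigma> ` I"
    then obtain p p' where p: "p \<in> I" and x: "x = \<sigma> p" and p': "p' \<in> I" and xp: "nxt x = \<sigma> p'"
      by auto
    show False
    proof (cases "stay p")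
      case True
      then have xe: "x = p" using x by (simp add: \<sigma>_def)
      show False
      proof (cases "stay p'")
        case True
        then have "nxt p = p'" using xp xe by (simp add: \<sigma>_def)
        with Ii[OF p] p' show False by simp
      next
        case False
        then have "nxt p = prv p'" using xp xe by (simp add: \<sigma>_def)
        then have pe: "p' = nxt (nxt p)" using np p' IP by (metis subsetD)
        have "stay p'" using stay_nxt2[OF p \<open>stay p\<close>] pe p' by simp
        with False show False by simp
      qed
    next
      case False
      then have xe: "x = prv p" using x by (simp add: \<sigma>_def)
      have nx: "nxt x = p" using xe np p IP by auto
      show False
      proof (cases "stay p'")
        case True
        then have "p' = p" using xp nx by (simp add: \<sigma>_def)
        with True False show False by simp
      next
        case False
        then have "prv p' = p" using xp nx by (simp add: \<sigma>_def)
        then have "nxt p = p'" using np p' IP by auto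
        with Ii[OF p] p' show False by simp
      qed
    qed
  qed
  define S where "S = {p\<in>I. stay p}"
  define nn where "nn = (\<lambda>p. nxt (nxt p))"
  have finS: "finite S" using finI S_def by simp
  have SI: "S \<subseteq> I" using S_def by auto
  have notS: "g (\<sigma> p) \<le> f p" if "p \<in> I - S" for p
  proof -
    have p: "p \<in> I" and ns: "\<not> stay p" using that S_def by auto
    have "\<not> E p \<or> c p \<noteq> 0"
    proof (rule ccontr)
      assume "\<not> (\<not> E p \<or> c p \<noteq> 0)"
      then have "E p" "c p = 0" by auto
      then have "stay p" unfolding stay_def using p
        by (intro conjI exI[of _ 0]) auto
      with ns show False by simp
    qed
    then show ?thesis using sh[of p] p IP ns by (auto simp: \<sigma>_def)
  qed
  have Skey: "nn (q p) = p \<and> q p \<in> S" if "p \<in> S" and "c p \<noteq> 0" for p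
  proof -
    from that have p: "p \<in> I" and sp: "stay p" using S_def by auto
    from sp obtain t where t1: "c ((q^^t) p) = 0" and t2: "\<forall>r\<le>t. (q^^r) p \<in> I" and Ep: "E p"
      unfolding stay_def by blast
    have "t \<noteq> 0" proof assume "t = 0" then show False using t1 that by simp qed
    then obtain t' where t': "t = Suc t'" by (cases t) auto
    have "E (q p)" using EE' Ep p IP unfolding q_def by auto
    moreover have "c ((q^^t') (q p)) = 0" using t1 t'
      by (simp add: funpow_Suc_right del: funpow.simps)
    moreover have "\<forall>r\<le>t'. (q^^r) (q p) \<in> I"
    proof (intro allI impI)
      fix r assume "r \<le> t'"
      then have "(q^^(Suc r)) p \<in> I" using t2 t' by auto
      then show "(q^^r) (q p) \<in> I" by (simp add: funpow_Suc_right del: funpow.simps)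
    qed
    ultimately have "stay (q p)" unfolding stay_def by blast
    moreover have "q p \<in> I"
    proof -
      have "(q^^1) p \<in> I" using t2 t' by auto
      then show ?thesis by simp
    qed
    moreover have "nn (q p) = p" unfolding nn_def q_def using np pP p IP by auto
    ultimately show ?thesis using S_def by auto
  qed
  have sumc: "sum c S \<le> sum c (nn ` S)"
  proof -
    have "sum c S = sum c (S \<inter> nn ` S)"
    proof (rule sum.mono_neutral_right[OF finS])
      show "S \<inter> nn ` S \<subseteq> S" by auto
      show "\<forall>i\<in>S - S \<inter> nn ` S. c i = 0"
      proof
        fix i assume "i \<in> S - S \<inter> nn ` S"
        then have i1: "i \<in> S" and i2: "i \<notin> nn ` S" by auto
        show "c i = 0"
        proof (rule ccontr)
          assume "c i \<noteq> 0"
          then have "nn (q i) = i" "q i \<in> S" using Skey[OF i1] by auto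
          then have "i \<in> nn ` S" by (metis image_eqI)
          with i2 show False by simp
        qed
      qed
    qed
    also have "\<dots> \<le> sum c (nn ` S)"
    proof (rule sum_mono2)
      show "finite (nn ` S)" using finS by simp
      show "S \<inter> nn ` S \<subseteq> nn ` S" by auto
      fix b assume "b \<in> nn ` S - S \<inter> nn ` S"
      then obtain p where p: "p \<in> S" and b: "b = nn p" by auto
      have "E p" "p \<in> P" using p S_def stay_def IP by auto
      then show "0 \<le> c b" using b c0 EE nP unfolding nn_def by auto
    qed
    finally show ?thesis .
  qed
  have injnn: "inj_on nn S"
  proof (rule inj_onI)
    fix x y assume "x \<in> S" "y \<in> S" "nn x = nn y"
    then have "prv (prv (nn x)) = prv (prv (nn y))" by simp
    then show "x = y" using \<open>x \<in> S\<close> \<open>y \<in> S\<close> SI IP pn nP unfolding nn_def by (metis subsetD)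
  qed
  have stayS: "g (\<sigma> p) = f p + c p - c (nn p)" if "p \<in> S" for p
    using that st[of p] S_def stay_def IP \<sigma>_def nn_def by auto
  have "sum g (\<sigma> ` I) = sum (g \<circ> \<sigma>) I" using sum.reindex[OF inj] by simp
  also have "\<dots> = sum (g \<circ> \<sigma>) S + sum (g \<circ> \<sigma>) (I - S)"
    using sum.subset_diff[OF SI finI] by (simp add: add.commute)
  also have "sum (g \<circ> \<sigma>) S = sum f S + sum c S - sum (\<lambda>p. c (nn p)) S"
    using stayS by (simp add: sum.distrib sum_subtractf)
  also have "sum (\<lambda>p. c (nn p)) S = sum c (nn ` S)" using sum.reindex[OF injnn, of c] by simp
  also have "sum (g \<circ> \<sigma>) (I - S) \<le> sum f (I - S)" using notS by (intro sum_mono) auto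
  finally have "sum g (\<sigma> ` I) \<le> sum f S + sum c S - sum c (nn ` S) + sum f (I - S)" by simp
  also have "\<dots> \<le> sum f S + sum f (I - S)" using sumc by simp
  also have "\<dots> = sum f I" using sum.subset_diff[OF SI finI, of f] by (simp add: add.commute)
  finally have cost: "sum g (\<sigma> ` I) \<le> sum f I" .
  show ?thesis
    by (intro exI[of _ "\<sigma> ` I"] conjI sub indep cost card_image inj)
qed



lemma tidx_cong: "x mod (2*int N) = y mod (2*int N) \<Longrightarrow> tidx N A x = tidx N A y"
  by (simp add: tidx_def)

lemma cong2: "(X::int) mod int N = Y mod int N \<Longrightarrow> (2*X + c) mod (2*int N) = (2*Y + c) mod (2*int N)"
proof -
  assume "X mod int N = Y mod int N"
  then have "int N dvd X - Y" by (simp add: mod_eq_dvd_iff)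
  then obtain k where k: "X - Y = int N * k" by (auto simp: dvd_def)
  have "(2*X + c) - (2*Y + c) = 2*(X - Y)" by simp
  also have "\<dots> = (2 * int N) * k" using k by simp
  finally have "2 * int N dvd (2*X + c) - (2*Y + c)" by simp
  then show ?thesis by (simp add: mod_eq_dvd_iff)
qed

lemma tidx_cong2: "(X::int) mod int N = Y mod int N \<Longrightarrow> tidx N A (2*X + c) = tidx N A (2*Y + c)"
  by (rule tidx_cong, rule cong2)

lemma tidx_cong2': "(X::int) mod int N = Y mod int N \<Longrightarrow> tidx N A (2*X) = tidx N A (2*Y)"
  using tidx_cong2[of X N Y A 0] by simp

definition dd :: "nat \<Rightarrow> (nat \<Rightarrow> real) \<Rightarrow> int \<Rightarrow> real" where
  "dd N A j = tidx N A (2*j+1) - tidx N A (2*j)"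
definition SS :: "nat \<Rightarrow> (nat \<Rightarrow> real) \<Rightarrow> int \<Rightarrow> nat \<Rightarrow> real" where
  "SS N A j k = (\<Sum>l=1..k. dd N A (j - int l))"
definition mm :: "nat \<Rightarrow> (nat \<Rightarrow> real) \<Rightarrow> int \<Rightarrow> real" where
  "mm N A j = Min ((\<lambda>k. SS N A j k) ` {0..<N})"

lemma bar_even_mm: "bar_even N A n = min (tidx N A (2*n+1)) (tidx N A (2*n) - mm N A n)"
  by (simp add: bar_even_def mm_def SS_def dd_def)

lemma dd_cong: "j mod int N = j' mod int N \<Longrightarrow> dd N A j = dd N A j'"
  unfolding dd_def using tidx_cong2[of j N j' A 1] tidx_cong2'[of j N j' A] by simp

lemma SS_cong: "j mod int N = j' mod int N \<Longrightarrow> SS N A j k = SS N A j' k"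
  unfolding SS_def
  by (rule sum.cong[OF refl], rule dd_cong, rule mod_diff_cong) auto

lemma mm_cong: "j mod int N = j' mod int N \<Longrightarrow> mm N A j = mm N A j'"
  unfolding mm_def using SS_cong[of j N j' A] by simp

lemma bar_even_cong: "j mod int N = j' mod int N \<Longrightarrow> bar_even N A j = bar_even N A j'"
  unfolding bar_even_mm using tidx_cong2[of j N j' A 1] tidx_cong2'[of j N j' A] mm_cong[of j N j' A]
  by simp

lemma SS_0: "SS N A j 0 = 0" by (simp add: SS_def)

lemma SS_Suc: "SS N A j (Suc k) = SS N A j k + dd N A (j - int (Suc k))"
  by (simp add: SS_def)

lemma SS_shift: "SS N A (j+1) (Suc k) = dd N A j + SS N A j k"
proof (induction k)
  case 0 then show ?case by (simp add: SS_def)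
next
  case (Suc k)
  have "SS N A (j+1) (Suc (Suc k)) = SS N A (j+1) (Suc k) + dd N A (j + 1 - int (Suc (Suc k)))"
    by (rule SS_Suc)
  also have "dd N A (j + 1 - int (Suc (Suc k))) = dd N A (j - int (Suc k))" by (simp add: algebra_simps)
  finally show ?case using Suc SS_Suc[of N A j k] by simp
qed

lemma SS_period_step: assumes "N > 0" shows "SS N A (j+1) N = SS N A j N"
proof -
  obtain n where n: "N = Suc n" using assms by (cases N) auto
  have "SS N A (j+1) N = dd N A j + SS N A j n" using SS_shift n by simp
  moreover have "SS N A j N = SS N A j n + dd N A (j - int N)" using SS_Suc n by simp
  moreover have "dd N A (j - int N) = dd N A j" by (rule dd_cong) simp
  ultimately show ?thesis by simp
qed

lemma SS_period: assumes "N > 0" shows "SS N A j N = SS N A 0 N"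
proof (induction j rule: int_induct[where k=0])
  case base then show ?case by simp
next
  case (step1 i) then show ?case using SS_period_step[OF assms, of A i] by simp
next
  case (step2 i) then show ?case using SS_period_step[OF assms, of A "i - 1"] by simp
qed

lemma sum_shift1:
  fixes h :: "int \<Rightarrow> real"
  assumes "\<And>x. h (x + int N) = h x"
  shows "(\<Sum>l=1..N. h (int l + 1)) = (\<Sum>l=1..N. h (int l))"
proof -
  have e1: "(\<Sum>l=Suc 1..Suc N. h (int l)) = (\<Sum>l=1..N. h (int (Suc l)))"
    by (rule sum.shift_bounds_cl_Suc_ivl)
  have e2: "(\<Sum>l=1..Suc N. h (int l)) = h 1 + (\<Sum>l=Suc 1..Suc N. h (int l))"
    by (subst sum.atLeast_Suc_atMost) auto
  have e3: "(\<Sum>l=1..Suc N. h (int l)) = (\<Sum>l=1..N. h (int l)) + h (int (Suc N))"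
    by simp
  have e4: "h (int (Suc N)) = h 1" using assms[of 1] by (simp add: add.commute)
  have e5: "(\<Sum>l=1..N. h (int (Suc l))) = (\<Sum>l=1..N. h (int l + 1))"
    by (simp add: add.commute)
  show ?thesis using e1 e2 e3 e4 e5 by linarith
qed

lemma SS_pos:
  assumes N: "N > 0" and ps: "phase_space N A"
  shows "SS N A j N > 0"
proof -
  have "SS N A j N = SS N A (int N + 1) N" using SS_period[OF N, of A j] SS_period[OF N, of A "int N + 1"] by simp
  also have "\<dots> = (\<Sum>l=1..N. dd N A (int N + 1 - int (N + 1 - l)))"
    unfolding SS_def by (subst sum.atLeastAtMost_rev) simp
  also have "\<dots> = (\<Sum>l=1..N. dd N A (int l))"
    by (rule sum.cong) auto
  also have "\<dots> = (\<Sum>l=1..N. tidx N A (2 * int l + 1)) - (\<Sum>l=1..N. tidx N A (2 * int l))"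
    by (simp add: dd_def sum_subtractf)
  also have "(\<Sum>l=1..N. tidx N A (2 * int l + 1)) = (\<Sum>l=1..N. tidx N A (2 * int l - 1))"
  proof -
    let ?h = "\<lambda>x. tidx N A (2 * x - 1)"
    have "\<And>x. ?h (x + int N) = ?h x"
    proof -
      fix x :: int
      have e: "2*(x + int N) - 1 = (2*x - 1) + 2*int N" by simp
      show "?h (x + int N) = ?h x" by (intro tidx_cong, subst e, rule mod_add_self2)
    qed
    from sum_shift1[of ?h N, OF this] show ?thesis by (simp add: algebra_simps)
  qed
  finally show ?thesis using ps unfolding phase_space_def by simp
qed

lemma mm_rec:
  assumes N: "N \<ge> 2" and ps: "phase_space N A"
  shows "mm N A (j+1) = min 0 (dd N A j + mm N A j)"
proof -
  have fin: "finite ((\<lambda>k. SS N A j k) ` {0..<N})" by simp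
  have ne: "(\<lambda>k. SS N A j k) ` {0..<N} \<noteq> {}" using N by auto
  obtain k0 where k0: "k0 < N" "mm N A j = SS N A j k0"
    using Min_in[OF fin ne] unfolding mm_def by auto
  have mle: "mm N A j \<le> SS N A j k" if "k < N" for k
    unfolding mm_def using that by (intro Min_le) auto
  show ?thesis unfolding mm_def[of N A "j+1"]
  proof (rule Min_eqI)
    show "finite ((\<lambda>k. SS N A (j+1) k) ` {0..<N})" by simp
    fix y assume "y \<in> (\<lambda>k. SS N A (j+1) k) ` {0..<N}"
    then obtain k where k: "k < N" "y = SS N A (j+1) k" by auto
    show "min 0 (dd N A j + mm N A j) \<le> y"
    proof (cases k)
      case 0 then show ?thesis using k by (simp add: SS_0)
    next
      case (Suc k')
      then have "y = dd N A j + SS N A j k'" using k SS_shift by simp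
      moreover have "mm N A j \<le> SS N A j k'" using mle Suc k by simp
      ultimately show ?thesis by simp
    qed
  next
    show "min 0 (dd N A j + mm N A j) \<in> (\<lambda>k. SS N A (j+1) k) ` {0..<N}"
    proof (cases "0 \<le> dd N A j + mm N A j")
      case True
      then have "min 0 (dd N A j + mm N A j) = SS N A (j+1) 0" by (simp add: SS_0)
      then show ?thesis using N by auto
    next
      case False
      have "k0 \<noteq> N - 1"
      proof
        assume "k0 = N - 1"
        then have "dd N A j + mm N A j = SS N A (j+1) N"
          using k0 SS_shift[of N A j "N-1"] N by (simp add: Suc_diff_1)
        then show False using False SS_pos[of N A "j+1"] N ps by simp
      qed
      then have "Suc k0 < N" using k0 by simp
      moreover have "min 0 (dd N A j + mm N A j) = SS N A (j+1) (Suc k0)"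
        using False k0 SS_shift by simp
      ultimately show ?thesis by (metis atLeastLessThan_iff image_eqI zero_le)
    qed
  qed
qed

lemma mm_le0: "N > 0 \<Longrightarrow> mm N A j \<le> 0"
  unfolding mm_def using SS_0[of N A j] by (metis Min_le atLeastLessThan_iff finite_atLeastLessThan finite_imageI image_eqI zero_le)

lemma Tstep:
  assumes N: "N > 0"
  shows "tidx N (toda_step N A) x = (if even x then bar_even N A (x div 2)
          else tidx N A x + tidx N A (x+1) - bar_even N A (x div 2))"
proof -
  let ?M = "2 * int N"
  have M: "?M > 0" using N by simp
  have r: "int (nat (x mod ?M)) mod ?M = x mod ?M" using M by simp
  have ev: "even (x mod ?M) = even x"
    using dvd_mod_iff[of 2 "2*int N" x] by simp
  have dv: "(x mod ?M) div 2 mod int N = x div 2 mod int N"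
  proof -
    have "x mod (of_nat 2 * of_nat N) = of_nat 2 * (x div of_nat 2 mod of_nat N) + x mod of_nat 2"
      by (rule mod_mult2_eq')
    then have "x mod ?M = 2 * (x div 2 mod int N) + x mod 2" by simp
    then have "(x mod ?M) div 2 = x div 2 mod int N" by simp
    then show ?thesis by simp
  qed
  have b: "bar_even N A ((x mod ?M) div 2) = bar_even N A (x div 2)"
    by (rule bar_even_cong[OF dv])
  have t1: "tidx N A (x mod ?M) = tidx N A x" by (rule tidx_cong) simp
  have t2: "tidx N A (x mod ?M + 1) = tidx N A (x + 1)" by (rule tidx_cong) (simp add: mod_add_left_eq)
  show ?thesis
    unfolding tidx_def[of N "toda_step N A"] toda_step_def Let_def r ev b
    using t1 t2 by (simp add: tidx_def[symmetric])
qed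



definition nx :: "nat \<Rightarrow> nat \<Rightarrow> nat" where "nx N p = (if p = 2*N then 1 else p+1)"
definition pv :: "nat \<Rightarrow> nat \<Rightarrow> nat" where "pv N p = (if p = 1 then 2*N else p - 1)"

lemma nx_in: "N \<ge> 1 \<Longrightarrow> p \<in> {1..2*N} \<Longrightarrow> nx N p \<in> {1..2*N}" by (auto simp: nx_def)
lemma pv_in: "N \<ge> 1 \<Longrightarrow> p \<in> {1..2*N} \<Longrightarrow> pv N p \<in> {1..2*N}" by (auto simp: pv_def)
lemma nx_pv: "N \<ge> 1 \<Longrightarrow> p \<in> {1..2*N} \<Longrightarrow> nx N (pv N p) = p" by (auto simp: nx_def pv_def)
lemma pv_nx: "N \<ge> 1 \<Longrightarrow> p \<in> {1..2*N} \<Longrightarrow> pv N (nx N p) = p" by (auto simp: nx_def pv_def)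
lemma ev_nx: "N \<ge> 1 \<Longrightarrow> p \<in> {1..2*N} \<Longrightarrow> even p \<Longrightarrow> even (nx N (nx N p))"
  by (auto simp: nx_def)
lemma ev_pv: "N \<ge> 1 \<Longrightarrow> p \<in> {1..2*N} \<Longrightarrow> even p \<Longrightarrow> even (pv N (pv N p))"
  by (auto simp: pv_def)

lemma pv_mod: "N \<ge> 1 \<Longrightarrow> p \<in> {1..2*N} \<Longrightarrow> int (pv N p) mod (2*int N) = (int p - 1) mod (2*int N)"
  by (auto simp: pv_def of_nat_diff)
lemma nx_mod: "N \<ge> 1 \<Longrightarrow> p \<in> {1..2*N} \<Longrightarrow> int (nx N p) mod (2*int N) = (int p + 1) mod (2*int N)"
  by (auto simp: nx_def add.commute)

lemma nx2_div: "N \<ge> 1 \<Longrightarrow> p \<in> {1..2*N} \<Longrightarrow> even p \<Longrightarrow>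
   (int (nx N (nx N p)) div 2) mod int N = (int p div 2 + 1) mod int N"
proof -
  assume N: "N \<ge> 1" and p: "p \<in> {1..2*N}" and e: "even p"
  show ?thesis
  proof (cases "p = 2*N")
    case True
    then have "nx N (nx N p) = 2" using N by (simp add: nx_def)
    then show ?thesis using True by simp
  next
    case False
    then have "p + 1 \<noteq> 2*N" using e by presburger
    then have "nx N (nx N p) = p + 2" using False by (simp add: nx_def)
    then show ?thesis using e by (auto simp: add.commute)
  qed
qed

lemma pv2_div: "N \<ge> 1 \<Longrightarrow> p \<in> {1..2*N} \<Longrightarrow> even p \<Longrightarrow>
   (int (pv N (pv N p)) div 2 + 1) mod int N = (int p div 2) mod int N"
proof -
  assume N: "N \<ge> 1" and p: "p \<in> {1..2*N}" and e: "even p"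
  show ?thesis
  proof (cases "p = 2")
    case True
    then have "pv N (pv N p) = 2*N" using N by (simp add: pv_def)
    then show ?thesis using True by simp
  next
    case False
    have "1 \<le> p" using p by simp
    then have "p \<ge> 4" using e False by presburger
    then have "pv N (pv N p) = p - 2" by (auto simp: pv_def)
    then show ?thesis using e \<open>p \<ge> 4\<close> by (auto simp: of_nat_diff)
  qed
qed

lemma adm_iff: "N \<ge> 1 \<Longrightarrow> I \<in> adm_sets N k \<longleftrightarrow> I \<subseteq> {1..2*N} \<and> card I = k \<and> (\<forall>i\<in>I. nx N i \<notin> I)"
proof -
  assume N: "N \<ge> 1"
  show ?thesis
  proof
    assume "I \<in> adm_sets N k"
    then have s: "I \<subseteq> {1..2*N}" and c: "card I = k" and g: "\<forall>i\<in>I. \<forall>j\<in>I. i < j \<longrightarrow> i + 1 < j"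
      and n: "\<not> (1 \<in> I \<and> 2*N \<in> I)" by (auto simp: adm_sets_def)
    have "\<forall>i\<in>I. nx N i \<notin> I"
    proof (intro ballI notI)
      fix i assume i: "i \<in> I" and ni: "nx N i \<in> I"
      show False
      proof (cases "i = 2*N")
        case True then show False using n i ni by (simp add: nx_def)
      next
        case False then show False using g i ni by (auto simp: nx_def)
      qed
    qed
    then show "I \<subseteq> {1..2*N} \<and> card I = k \<and> (\<forall>i\<in>I. nx N i \<notin> I)" using s c by simp
  next
    assume a: "I \<subseteq> {1..2*N} \<and> card I = k \<and> (\<forall>i\<in>I. nx N i \<notin> I)"
    have g: "\<forall>i\<in>I. \<forall>j\<in>I. i < j \<longrightarrow> i + 1 < j"
    proof (intro ballI impI)
      fix i j assume i: "i \<in> I" and j: "j \<in> I" and ij: "i < j"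
      show "i + 1 < j"
      proof (rule ccontr)
        assume "\<not> i + 1 < j"
        then have "j = i + 1" using ij by simp
        moreover have "i \<noteq> 2*N" using ij j a by auto
        ultimately have "nx N i = j" by (simp add: nx_def)
        then show False using a i j by auto
      qed
    qed
    have n: "\<not> (1 \<in> I \<and> 2*N \<in> I)" using a by (auto simp: nx_def)
    show "I \<in> adm_sets N k" using a g n by (simp add: adm_sets_def)
  qed
qed

context
  fixes N :: nat and A :: "nat \<Rightarrow> real"
  assumes N3: "N \<ge> 3" and ps: "phase_space N A"
begin

lemma N0: "N > 0" using N3 by simp
lemma N1: "N \<ge> 1" using N3 by simp

lemma K1: "tidx N (toda_step N A) (2*j) = bar_even N A j"
  using Tstep[OF N0, of A "2*j"] by simp
lemma K2: "tidx N (toda_step N A) (2*j+1) = tidx N A (2*j+1) + tidx N A (2*j+2) - bar_even N A j"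
  using Tstep[OF N0, of A "2*j+1"] by (simp add: add.assoc)
lemma K3: "bar_even N A j = tidx N A (2*j) - mm N A j + mm N A (j+1)"
  using mm_rec[of N A j] N3 ps bar_even_mm[of N A j] by (simp add: dd_def)
lemma K4: "mm N A (j+1) < 0 \<Longrightarrow> bar_even N A j = tidx N A (2*j+1)"
  using mm_rec[of N A j] N3 ps bar_even_mm[of N A j] by (simp add: dd_def)
lemma K5: "bar_even N A j \<le> tidx N A (2*j+1)"
  using bar_even_mm[of N A j] by simp

lemma fwd:
  assumes I: "I \<in> adm_sets N k"
  shows "\<exists>I'\<in>adm_sets N k. (\<Sum>i\<in>I'. tidx N (toda_step N A) (int i)) \<le> (\<Sum>i\<in>I. tidx N A (int i))"
proof -
  let ?T = "toda_step N A"
  let ?f = "\<lambda>p::nat. tidx N A (int p)"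
  let ?g = "\<lambda>p::nat. tidx N ?T (int p)"
  let ?c = "\<lambda>p::nat. - mm N A (int p div 2)"
  let ?P = "{1..2*N}"
  have Ia: "I \<subseteq> ?P" "\<And>i. i \<in> I \<Longrightarrow> nx N i \<notin> I" "card I = k" using I adm_iff[OF N1] by auto
  have "\<exists>I'. I' \<subseteq> ?P \<and> card I' = card I \<and> (\<forall>i\<in>I'. nx N i \<notin> I') \<and> sum ?g I' \<le> sum ?f I"
  proof (rule shift_lemma[where E=even and c="?c" and prv="pv N"])
    show "finite ?P" by simp
    show "\<And>p. p \<in> ?P \<Longrightarrow> nx N p \<in> ?P" using nx_in[OF N1] by blast
    show "\<And>p. p \<in> ?P \<Longrightarrow> pv N p \<in> ?P" using pv_in[OF N1] by blast
    show "\<And>p. p \<in> ?P \<Longrightarrow> nx N (pv N p) = p" using nx_pv[OF N1] by blast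
    show "\<And>p. p \<in> ?P \<Longrightarrow> pv N (nx N p) = p" using pv_nx[OF N1] by blast
    show "\<And>p. p \<in> ?P \<Longrightarrow> even p \<Longrightarrow> even (nx N (nx N p))" using ev_nx[OF N1] by blast
    show "\<And>p. p \<in> ?P \<Longrightarrow> even p \<Longrightarrow> even (pv N (pv N p))" using ev_pv[OF N1] by blast
    show "\<And>p. p \<in> ?P \<Longrightarrow> even p \<Longrightarrow> 0 \<le> ?c p" using mm_le0[OF N0] by simp
    show "I \<subseteq> ?P" by (rule Ia(1))
    show "\<And>i. i \<in> I \<Longrightarrow> nx N i \<notin> I" by (rule Ia(2))
  next
    fix p assume p: "p \<in> ?P" and h: "odd p \<or> ?c p \<noteq> 0"
    have gp: "?g (pv N p) = tidx N ?T (int p - 1)" by (rule tidx_cong, rule pv_mod[OF N1 p])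
    show "?g (pv N p) \<le> ?f p"
    proof (cases "odd p")
      case True
      then obtain j where j: "int p = 2*j + 1" by (metis even_of_nat odd_two_times_div_two_succ)
      have "tidx N ?T (int p - 1) = bar_even N A j" using K1[of j] j by simp
      also have "\<dots> \<le> tidx N A (2*j+1)" by (rule K5)
      finally show ?thesis using gp j by simp
    next
      case False
      then obtain j where j: "int p = 2*j" by (metis even_of_nat evenE)
      have "mm N A j \<noteq> 0" using h False j by simp
      then have "mm N A ((j - 1) + 1) < 0" using mm_le0[OF N0, of A j] by simp
      then have b: "bar_even N A (j-1) = tidx N A (2*(j-1)+1)" by (rule K4)
      have "tidx N ?T (int p - 1) = tidx N ?T (2*(j-1)+1)" using j by (simp add: algebra_simps)
      also have "\<dots> = tidx N A (2*(j-1)+2)" using K2[of "j-1"] b by simp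
      also have "\<dots> = ?f p" using j by (simp add: algebra_simps)
      finally show ?thesis using gp by simp
    qed
  next
    fix p assume p: "p \<in> ?P" and e: "even p"
    then obtain j where j: "int p = 2*j" by (metis even_of_nat evenE)
    have "?c (nx N (nx N p)) = - mm N A (j + 1)"
      using mm_cong[OF nx2_div[OF N1 p e], of A] j by simp
    then show "?g p = ?f p + ?c p - ?c (nx N (nx N p))"
      using K1[of j] K3[of j] j by simp
  qed
  then obtain I' where "I' \<subseteq> ?P" "card I' = card I" "\<forall>i\<in>I'. nx N i \<notin> I'" "sum ?g I' \<le> sum ?f I"
    by blast
  then show ?thesis using adm_iff[OF N1, of I' k] Ia(3) by auto
qed

lemma bwd:
  assumes I: "I \<in> adm_sets N k"
  shows "\<exists>I'\<in>adm_sets N k. (\<Sum>i\<in>I'. tidx N A (int i)) \<le> (\<Sum>i\<in>I. tidx N (toda_step N A) (int i))"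
proof -
  let ?T = "toda_step N A"
  let ?f = "\<lambda>p::nat. tidx N A (int p)"
  let ?g = "\<lambda>p::nat. tidx N ?T (int p)"
  let ?c = "\<lambda>p::nat. - mm N A (int p div 2 + 1)"
  let ?P = "{1..2*N}"
  have Ia: "I \<subseteq> ?P" "\<And>i. i \<in> I \<Longrightarrow> nx N i \<notin> I" "card I = k" using I adm_iff[OF N1] by auto
  have Ib: "\<And>i. i \<in> I \<Longrightarrow> pv N i \<notin> I"
  proof
    fix i assume i: "i \<in> I" and pi: "pv N i \<in> I"
    then have "nx N (pv N i) = i" using nx_pv[OF N1] Ia(1) by blast
    then show False using Ia(2)[OF pi] i by simp
  qed
  have "\<exists>I'. I' \<subseteq> ?P \<and> card I' = card I \<and> (\<forall>i\<in>I'. pv N i \<notin> I') \<and> sum ?f I' \<le> sum ?g I"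
  proof (rule shift_lemma[where E=even and c="?c" and prv="nx N"])
    show "finite ?P" by simp
    show "\<And>p. p \<in> ?P \<Longrightarrow> nx N p \<in> ?P" using nx_in[OF N1] by blast
    show "\<And>p. p \<in> ?P \<Longrightarrow> pv N p \<in> ?P" using pv_in[OF N1] by blast
    show "\<And>p. p \<in> ?P \<Longrightarrow> nx N (pv N p) = p" using nx_pv[OF N1] by blast
    show "\<And>p. p \<in> ?P \<Longrightarrow> pv N (nx N p) = p" using pv_nx[OF N1] by blast
    show "\<And>p. p \<in> ?P \<Longrightarrow> even p \<Longrightarrow> even (nx N (nx N p))" using ev_nx[OF N1] by blast
    show "\<And>p. p \<in> ?P \<Longrightarrow> even p \<Longrightarrow> even (pv N (pv N p))" using ev_pv[OF N1] by blast
    show "\<And>p. p \<in> ?P \<Longrightarrow> even p \<Longrightarrow> 0 \<le> ?c p" using mm_le0[OF N0] by simp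
    show "I \<subseteq> ?P" by (rule Ia(1))
    show "\<And>i. i \<in> I \<Longrightarrow> pv N i \<notin> I" by (rule Ib)
  next
    fix p assume p: "p \<in> ?P" and h: "odd p \<or> ?c p \<noteq> 0"
    have fp: "?f (nx N p) = tidx N A (int p + 1)" by (rule tidx_cong, rule nx_mod[OF N1 p])
    show "?f (nx N p) \<le> ?g p"
    proof (cases "odd p")
      case True
      then obtain j where j: "int p = 2*j + 1" by (metis even_of_nat odd_two_times_div_two_succ)
      have "?g p = tidx N A (2*j+1) + tidx N A (2*j+2) - bar_even N A j" using K2[of j] j by simp
      moreover have "bar_even N A j \<le> tidx N A (2*j+1)" by (rule K5)
      moreover have "?f (nx N p) = tidx N A (2*j+2)" using fp j by (simp add: add.assoc)
      ultimately show ?thesis by simp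
    next
      case False
      then obtain j where j: "int p = 2*j" by (metis even_of_nat evenE)
      have "mm N A (j+1) \<noteq> 0" using h False j by simp
      then have "mm N A (j + 1) < 0" using mm_le0[OF N0, of A "j+1"] by simp
      then have b: "bar_even N A j = tidx N A (2*j+1)" by (rule K4)
      have "?g p = bar_even N A j" using K1[of j] j by simp
      then show ?thesis using b fp j by simp
    qed
  next
    fix p assume p: "p \<in> ?P" and e: "even p"
    then obtain j where j: "int p = 2*j" by (metis even_of_nat evenE)
    have "?c (pv N (pv N p)) = - mm N A j"
      using mm_cong[OF pv2_div[OF N1 p e], of A] j by simp
    then show "?f p = ?g p + ?c p - ?c (pv N (pv N p))"
      using K1[of j] K3[of j] j by simp
  qed
  then obtain I' where I': "I' \<subseteq> ?P" "card I' = card I" "\<forall>i\<in>I'. pv N i \<notin> I'" "sum ?f I' \<le> sum ?g I"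
    by blast
  have "\<forall>i\<in>I'. nx N i \<notin> I'"
  proof (intro ballI notI)
    fix i assume i: "i \<in> I'" and ni: "nx N i \<in> I'"
    then have "pv N (nx N i) = i" using pv_nx[OF N1] I'(1) by blast
    then show False using I'(3) ni i by metis
  qed
  then show ?thesis using adm_iff[OF N1, of I' k] Ia(3) I' by auto
qed

lemma adm_fin: "finite (adm_sets N k)"
proof -
  have "adm_sets N k \<subseteq> Pow {1..2*N}" by (auto simp: adm_sets_def)
  then show ?thesis by (rule finite_subset) simp
qed

lemma adm_ne: assumes "k \<le> N" shows "adm_sets N k \<noteq> {}"
proof -
  let ?I = "(\<lambda>i. 2*i) ` {1..k}"
  have "?I \<subseteq> {1..2*N}" using assms by auto
  moreover have "card ?I = k" by (subst card_image) (auto simp: inj_on_def)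
  moreover have "\<forall>i\<in>?I. nx N i \<notin> ?I"
  proof
    fix i assume "i \<in> ?I"
    then have "odd (nx N i)" by (auto simp: nx_def)
    then show "nx N i \<notin> ?I" by auto
  qed
  ultimately have "?I \<in> adm_sets N k" using adm_iff[OF N1] by blast
  then show ?thesis by blast
qed

lemma Hk: assumes "1 \<le> k" "k \<le> N" shows "H N k (toda_step N A) = H N k A"
proof -
  let ?T = "toda_step N A"
  let ?W = "\<lambda>X I. \<Sum>i\<in>I. tidx N X (int i)"
  have HH: "H N k X = Min (?W X ` adm_sets N k)" for X using assms by (simp add: H_def)
  have fin: "finite (?W X ` adm_sets N k)" for X using adm_fin by simp
  have ne: "?W X ` adm_sets N k \<noteq> {}" for X using adm_ne[OF assms(2)] by simp
  have le1: "Min (?W ?T ` adm_sets N k) \<le> Min (?W A ` adm_sets N k)"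
  proof -
    obtain I where I: "I \<in> adm_sets N k" "?W A I = Min (?W A ` adm_sets N k)"
      using Min_in[OF fin[of A] ne[of A]] by auto
    obtain I' where I': "I' \<in> adm_sets N k" "?W ?T I' \<le> ?W A I" using fwd[OF I(1)] by blast
    have "Min (?W ?T ` adm_sets N k) \<le> ?W ?T I'" using I' fin[of ?T] by (intro Min_le) auto
    then show ?thesis using I I' by simp
  qed
  have le2: "Min (?W A ` adm_sets N k) \<le> Min (?W ?T ` adm_sets N k)"
  proof -
    obtain I where I: "I \<in> adm_sets N k" "?W ?T I = Min (?W ?T ` adm_sets N k)"
      using Min_in[OF fin[of ?T] ne[of ?T]] by auto
    obtain I' where I': "I' \<in> adm_sets N k" "?W A I' \<le> ?W ?T I" using bwd[OF I(1)] by blast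
    have "Min (?W A ` adm_sets N k) \<le> ?W A I'" using I' fin[of A] by (intro Min_le) auto
    then show ?thesis using I I' by simp
  qed
  show ?thesis using le1 le2 HH[of ?T] HH[of A] by simp
qed

lemma sum_pairs:
  fixes h :: "int \<Rightarrow> real"
  shows "(\<Sum>i=1..2*n. h (int i)) = (\<Sum>j<n. h (2*int j + 1) + h (2*int j + 2))"
proof (induction n)
  case 0 then show ?case by simp
next
  case (Suc n)
  have "(\<Sum>i=1..2*Suc n. h (int i)) = (\<Sum>i=1..2*n. h (int i)) + h (2*int n + 1) + h (2*int n + 2)"
    by (simp add: add.commute)
  then show ?case using Suc by simp
qed

lemma Hlast: "H N (N+1) (toda_step N A) = H N (N+1) A"
proof -
  let ?T = "toda_step N A"
  let ?b = "\<lambda>n::nat. bar_even N A (int n)"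
  have "(\<Sum>i=1..2*N. tidx N ?T (int i)) = (\<Sum>j<N. tidx N ?T (2*int j + 1) + tidx N ?T (2*int j + 2))"
    by (rule sum_pairs)
  also have "\<dots> = (\<Sum>j<N. (tidx N A (2*int j + 1) + tidx N A (2*int j + 2)) + (?b (Suc j) - ?b j))"
  proof (rule sum.cong[OF refl])
    fix j
    have "tidx N ?T (2*int j + 2) = tidx N ?T (2*(int j + 1))" by (simp add: algebra_simps)
    also have "\<dots> = ?b (Suc j)" using K1[of "int j + 1"] by (simp add: add.commute)
    finally show "tidx N ?T (2*int j + 1) + tidx N ?T (2*int j + 2) =
       (tidx N A (2*int j + 1) + tidx N A (2*int j + 2)) + (?b (Suc j) - ?b j)"
      using K2[of "int j"] by simp
  qed
  also have "\<dots> = (\<Sum>j<N. tidx N A (2*int j + 1) + tidx N A (2*int j + 2)) + (?b N - ?b 0)"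
    using sum_lessThan_telescope[of ?b N] by (simp add: sum.distrib)
  also have "?b N = ?b 0" by (rule bar_even_cong) simp
  also have "(\<Sum>j<N. tidx N A (2*int j + 1) + tidx N A (2*int j + 2)) = (\<Sum>i=1..2*N. tidx N A (int i))"
    by (rule sum_pairs[symmetric])
  finally show ?thesis by (simp add: H_def)
qed

end

theorem mainTheorem3:
  fixes N :: nat and A :: "nat \<Rightarrow> real"
  assumes "N \<ge> 3"
    and "phase_space N A"
  shows "\<forall>k\<in>{1..N+1}. H N k (toda_step N A) = H N k A"
proof
  fix k assume k: "k \<in> {1..N+1}"
  show "H N k (toda_step N A) = H N k A"
  proof (cases "k = N + 1")
    case True then show ?thesis using Hlast[OF assms] by simp
  next
    case False then show ?thesis using Hk[OF assms, of k] k by simp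
  qed
qed


end
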